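(* Let $F$ be a finite field, $m,n\ge1$, $T\in M_m(F)$, $S=\langle a_0,\dots,a_{n-1}\rangle\in F^n$, and let $f_T(\lambda)=\det(\lambda I_m-T)$, $f_S(\lambda)=a_0+a_1\lambda+\dots+a_{n-1}\lambda^{n-1}$. Let $f_{\langle T,S\rangle}(\lambda)=\sum_{i=0}^m c_i\lambda^{ni}f_S(\lambda)^{m-i}$, where $f_T=\sum_{i=0}^m c_i\lambda^i$ (this is the characteristic polynomial of the TSR step matrix $[\langle T,S\rangle]$). If $f_T$ is reducible over $F$, then $f_{\langle T,S\rangle}$ is reducible over $F$.
   Context: A polynomial over $F$ is reducible if it is a product of two polynomials of positive degree over $F$. *)

theory Defs
  imports "Jordan_Normal_Form.Char_Poly"
begin

definition reducible_poly :: "'a::field poly \<Rightarrow> bool" where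
  "reducible_poly p \<longleftrightarrow> (\<exists>g h. degree g > 0 \<and> degree h > 0 \<and> p = g * h)"

definition f_S :: "'a::field list \<Rightarrow> 'a poly" where
  "f_S S = Poly S"

definition f_TS :: "'a::field mat \<Rightarrow> 'a list \<Rightarrow> 'a poly" where
  "f_TS T S = (let m = dim_row T; n = length S; fT = char_poly T in
     (\<Sum>i=0..m. Polynomial.smult (coeff fT i) (monom 1 (n * i) * f_S S ^ (m - i))))"

end

theory Submission
  imports Defs
begin

definition hm :: "'a::comm_ring_1 poly \<Rightarrow> 'a poly \<Rightarrow> 'a poly \<Rightarrow> nat \<Rightarrow> 'a poly" where
  "hm X Y p k = (\<Sum>i=0..k. Polynomial.smult (coeff p i) (X^i * Y^(k-i)))"

lemma hm_zero[simp]: "hm X Y 0 k = 0"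
  by (simp add: hm_def)

lemma hm_add: "hm X Y (p + q) k = hm X Y p k + hm X Y q k"
  by (simp add: hm_def smult_add_left sum.distrib)

lemma smult_sum_r: "Polynomial.smult c (sum f A) = (\<Sum>x\<in>A. Polynomial.smult c (f x))"
  by (induction A rule: infinite_finite_induct) (simp_all add: smult_add_right)

lemma hm_smult: "hm X Y (Polynomial.smult c p) k = Polynomial.smult c (hm X Y p k)"
  unfolding hm_def by (simp add: smult_sum_r smult_smult)

lemma hm_pCons: "hm X Y (pCons a p) (Suc k) = Polynomial.smult a (Y^Suc k) + X * hm X Y p k"
proof -
  have "hm X Y (pCons a p) (Suc k) = Polynomial.smult a (Y^Suc k) +
      (\<Sum>i=0..k. Polynomial.smult (coeff p i) (X^Suc i * Y^(k-i)))"
    unfolding hm_def by (subst sum.atLeast0_atMost_Suc_shift) simp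
  also have "(\<Sum>i=0..k. Polynomial.smult (coeff p i) (X^Suc i * Y^(k-i))) = X * hm X Y p k"
    by (simp add: hm_def sum_distrib_left mult.assoc)
  finally show ?thesis .
qed

lemma hm_shift: assumes "degree p \<le> k" shows "hm X Y p (k + j) = Y^j * hm X Y p k"
proof -
  have "hm X Y p (k + j) = (\<Sum>i=0..k. Polynomial.smult (coeff p i) (X^i * Y^(k + j - i)))"
    unfolding hm_def
    by (rule sum.mono_neutral_right[of "{0..k+j}" "{0..k}"]) (use assms in \<open>auto simp: coeff_eq_0\<close>)
  also have "\<dots> = (\<Sum>i=0..k. Y^j * Polynomial.smult (coeff p i) (X^i * Y^(k - i)))"
  proof (rule sum.cong[OF refl])
    fix i assume "i \<in> {0..k}"
    then have e: "k + j - i = j + (k - i)" by simp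
    have "Y^(k + j - i) = Y^j * Y^(k-i)" by (simp only: e power_add)
    then show "Polynomial.smult (coeff p i) (X^i * Y^(k + j - i)) = Y^j * Polynomial.smult (coeff p i) (X^i * Y^(k - i))"
      by (simp add: algebra_simps)
  qed
  also have "\<dots> = Y^j * hm X Y p k" by (simp add: hm_def sum_distrib_left)
  finally show ?thesis .
qed

lemma hm_mult: "degree g \<le> a \<Longrightarrow> degree h \<le> b \<Longrightarrow>
   hm X Y (g * h) (a + b) = hm X Y g a * hm X Y h b"
proof (induction g arbitrary: a rule: pCons_induct)
  case 0
  then show ?case by simp
next
  case (pCons c p)
  show ?case
  proof (cases a)
    case 0
    with pCons have "p = 0" by (auto split: if_splits)
    then have g: "pCons c p = [:c:]" by simp
    have "hm X Y [:c:] 0 = Polynomial.smult c 1" by (simp add: hm_def)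
    then show ?thesis using 0 g by (simp add: hm_smult)
  next
    case (Suc a')
    with pCons have dp: "degree p \<le> a'" by (auto split: if_splits)
    have e: "pCons c p * h = Polynomial.smult c h + pCons 0 (p * h)" by simp
    have "hm X Y (pCons c p * h) (a + b) =
        Polynomial.smult c (hm X Y h (b + Suc a')) + X * hm X Y (p * h) (a' + b)"
      unfolding e hm_add hm_smult using Suc by (simp add: hm_pCons add.commute)
    also have "\<dots> = Polynomial.smult c (Y^Suc a' * hm X Y h b) + X * (hm X Y p a' * hm X Y h b)"
      using hm_shift[OF pCons(4), of X Y "Suc a'"] pCons(2)[OF dp pCons(4)] by (simp only:)
    also have "\<dots> = hm X Y (pCons c p) a * hm X Y h b"
      using Suc by (simp add: hm_pCons algebra_simps)
    finally show ?thesis .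
  qed
qed

lemma hm_degree:
  fixes p Y :: "'a::field poly"
  assumes "degree p = k" "p \<noteq> 0" "n \<ge> 1" "degree Y < n"
  shows "degree (hm (monom 1 n) Y p k) = n * k"
proof -
  have dterm: "degree (Polynomial.smult (coeff p i) (monom 1 n ^ i * Y^(k-i))) \<le> n * i + (n-1)*(k-i)" for i
  proof -
    have "degree (Polynomial.smult (coeff p i) (monom 1 n ^ i * Y^(k-i))) \<le> degree (monom (1::'a) n ^ i) + degree (Y^(k-i))"
      by (rule order_trans[OF degree_smult_le degree_mult_le])
    also have "\<dots> \<le> n * i + (n-1)*(k-i)"
    proof (rule add_mono)
      show "degree (monom (1::'a) n ^ i) \<le> n * i"
        by (rule order_trans[OF degree_power_le]) (simp add: degree_monom_eq mult.commute)
      have "degree Y \<le> n - 1" using assms(4) by simp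
      then have "degree Y * (k-i) \<le> (n-1)*(k-i)" by (rule mult_right_mono) simp
      then show "degree (Y^(k-i)) \<le> (n-1)*(k-i)"
        by (rule order_trans[OF degree_power_le])
    qed
    finally show ?thesis .
  qed
  have le: "n * i + (n-1)*(k-i) \<le> n * k" if "i \<le> k" for i
  proof -
    have "n * k = n * i + n * (k - i)" using that by (simp add: add_mult_distrib2[symmetric])
    then show ?thesis by simp
  qed
  have lt: "n * i + (n-1)*(k-i) < n * k" if "i < k" for i
  proof -
    have "n * k = n * i + n * (k - i)" using that by (simp add: add_mult_distrib2[symmetric])
    moreover have "(n-1)*(k-i) < n * (k-i)" using that assms(3) by simp
    ultimately show ?thesis by simp
  qed
  have "degree (hm (monom 1 n) Y p k) \<le> n * k"
    unfolding hm_def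
  proof (rule degree_sum_le)
    fix i assume "i \<in> {0..k}"
    then have "i \<le> k" by simp
    then show "degree (Polynomial.smult (coeff p i) (monom 1 n ^ i * Y ^ (k - i))) \<le> n * k"
      by (rule order_trans[OF dterm[of i] le])
  qed simp
  moreover have "coeff (hm (monom 1 n) Y p k) (n * k) = coeff p k"
  proof -
    have "coeff (hm (monom 1 n) Y p k) (n * k) =
      (\<Sum>i=0..k. coeff (Polynomial.smult (coeff p i) (monom 1 n ^ i * Y^(k-i))) (n * k))"
      by (simp add: hm_def coeff_sum)
    also have "\<dots> = coeff (Polynomial.smult (coeff p k) (monom 1 n ^ k * Y^(k-k))) (n * k)"
    proof (rule sum.mono_neutral_right[of "{0..k}" "{k}", simplified])
      show "\<forall>i\<in>{0..k} - {k}. coeff (Polynomial.smult (coeff p i) (monom 1 n ^ i * Y ^ (k - i))) (n * k) = 0"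
      proof
        fix i assume "i \<in> {0..k} - {k}"
        then have "i < k" by auto
        then show "coeff (Polynomial.smult (coeff p i) (monom 1 n ^ i * Y ^ (k - i))) (n * k) = 0"
          using dterm[of i] lt[of i] by (intro coeff_eq_0) linarith
      qed
    qed
    also have "\<dots> = coeff p k" by (simp add: monom_power)
    finally show ?thesis .
  qed
  moreover have "coeff p k \<noteq> 0" using leading_coeff_neq_0[OF assms(2)] assms(1) by simp
  ultimately show ?thesis using le_degree[of "hm (monom 1 n) Y p k" "n * k"] by simp
qed

theorem mainTheorem2:
  fixes T :: "'a::{field,finite} mat" and S :: "'a list" and m n :: nat
  assumes "m \<ge> 1" and "n \<ge> 1"
    and "T \<in> carrier_mat m m" and "length S = n"
    and "reducible_poly (char_poly T)"
  shows "reducible_poly (f_TS T S)"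
proof -
  let ?X = "monom (1::'a) n" and ?Y = "f_S S"
  have dc: "degree (char_poly T) = m" using degree_monic_char_poly[OF assms(3)] by simp
  have dr: "dim_row T = m" using assms(3) by simp
  have fts: "f_TS T S = hm ?X ?Y (char_poly T) m"
    unfolding f_TS_def hm_def Let_def dr assms(4) by (simp add: monom_power)
  obtain g h where g: "degree g > 0" and h: "degree h > 0" and gh: "char_poly T = g * h"
    using assms(5) unfolding reducible_poly_def by blast
  have nz: "g \<noteq> 0" "h \<noteq> 0" using g h by auto
  have dgh: "degree g + degree h = m" using dc gh nz by (simp add: degree_mult_eq)
  have dY: "degree ?Y < n"
  proof -
    have "degree ?Y \<le> n - 1" unfolding f_S_def
      by (rule degree_le) (use assms(2,4) in \<open>auto simp: nth_default_def\<close>)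
    then show ?thesis using assms(2) by simp
  qed
  have "f_TS T S = hm ?X ?Y g (degree g) * hm ?X ?Y h (degree h)"
  proof -
    have "hm ?X ?Y (g * h) (degree g + degree h) = hm ?X ?Y g (degree g) * hm ?X ?Y h (degree h)"
      by (rule hm_mult) auto
    then show ?thesis using fts gh dgh by simp
  qed
  moreover have "degree (hm ?X ?Y g (degree g)) > 0"
    using hm_degree[OF refl nz(1) assms(2) dY] g assms(2) by simp
  moreover have "degree (hm ?X ?Y h (degree h)) > 0"
    using hm_degree[OF refl nz(2) assms(2) dY] h assms(2) by simp
  ultimately show ?thesis unfolding reducible_poly_def by blast
qed

end
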